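(* For all $L>0$, $\delta t>0$ and $J\ge2$ with $\delta t/\delta x^2\le1/2$, and all $\ell\in\{0,\dots,J-1\}$, $$|1+\delta t\,\lambda_\ell|\le \exp\Big(-\frac{\delta t}{\delta x^2}\sin^2\Big(\frac{\ell\pi}{J}\Big)\Big).$$
   Context: $\delta x=L/(J-1)$ and $\lambda_\ell=-\frac{4}{\delta x^2}\sin^2\big(\frac{\ell\pi}{2J}\big)$, $0\le\ell\le J-1$ (these are the eigenvalues of the Neumann finite-difference matrix $\mathsf P_\delta=\frac1{\delta x^2}\,\mathrm{tridiag}$ with diagonal $(-1,-2,\dots,-2,-1)$ and off-diagonals $1$). *)

theory Defs
  imports Complex_Main
begin

definition grid_dx :: "real \<Rightarrow> nat \<Rightarrow> real" where
  "grid_dx L J = L / (real J - 1)"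

definition neumann_eig :: "real \<Rightarrow> nat \<Rightarrow> nat \<Rightarrow> real" where
  "neumann_eig L J l = - (4 / (grid_dx L J)^2) * (sin (real l * pi / (2 * real J)))^2"

end

theory Submission
  imports Defs
begin

lemma key:
  fixes r s :: real
  assumes "0 < r" "r \<le> 1/2" "0 \<le> s" "s \<le> 1"
  shows "\<bar>1 - 4*r*s\<bar> \<le> 1 - 4*r*s*(1-s)"
proof -
  have x: "4*r*s \<le> 2*s" using assms by (simp add: mult_right_mono)
  have y: "4*r*s*(1-s) \<le> 4*r*s" using assms by (simp add: mult_left_le)
  have z: "4*r*s*(2-s) \<le> 2*s*(2-s)" using x assms by (simp add: mult_right_mono)
  have w: "2*s*(2-s) \<le> 2" proof -
    have "2*s*(2-s) = 2 - 2*(1-s)^2" by (simp add: power2_eq_square algebra_simps)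
    thus ?thesis by simp
  qed
  show ?thesis using y z w by (auto simp: abs_if algebra_simps)
qed

theorem proposition3p2:
  fixes L dt :: real and J l :: nat
  assumes "L > 0" and "dt > 0" and "J \<ge> 2"
    and "dt / (grid_dx L J)^2 \<le> 1/2"
    and "l \<le> J - 1"
  shows "\<bar>1 + dt * neumann_eig L J l\<bar>
           \<le> exp (- (dt / (grid_dx L J)^2) * (sin (real l * pi / real J))^2)"
proof -
  define r where "r = dt / (grid_dx L J)^2"
  define t where "t = real l * pi / (2 * real J)"
  define s where "s = (sin t)^2"
  have dx: "grid_dx L J > 0" using assms(1,3) by (simp add: grid_dx_def)
  have r0: "r > 0" using dx assms(2) by (simp add: r_def)
  have s01: "0 \<le> s" "s \<le> 1" by (simp_all add: s_def abs_square_le_1)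
  have e1: "1 + dt * neumann_eig L J l = 1 - 4*r*s"
    by (simp add: neumann_eig_def r_def s_def t_def)
  have tt: "real l * pi / real J = 2 * t" using assms(3) by (simp add: t_def)
  have "(sin (2*t))^2 = 4 * s * (1 - s)"
  proof -
    have "(sin (2*t))^2 = 4 * (sin t)^2 * (cos t)^2" by (simp add: sin_double power_mult_distrib)
    also have "\<dots> = 4 * s * (1 - s)" by (simp add: s_def cos_squared_eq)
    finally show ?thesis .
  qed
  hence e2: "- (dt / (grid_dx L J)^2) * (sin (real l * pi / real J))^2 = - (4*r*s*(1-s))"
    by (simp add: tt r_def)
  have "\<bar>1 - 4*r*s\<bar> \<le> 1 - 4*r*s*(1-s)" using key[OF r0 _ s01] assms(4) r_def by simp
  also have "\<dots> \<le> exp (- (4*r*s*(1-s)))" using exp_ge_add_one_self[of "- (4*r*s*(1-s))"] by simp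
  finally show ?thesis using e1 e2 by simp
qed

end
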